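(* Let $n\ge3$ and let $N$ be the normal closure in $FVB_n$ of the subgroup $\langle(\rho_i\sigma_{i+1})^6\mid i=1,\dots,n-2\rangle$. Then $N\le\ker(\theta)\le FVP_n\cap FH_n$.
   Context: $FVB_n$ is the flat virtual braid group: generators $\sigma_1,\dots,\sigma_{n-1},\rho_1,\dots,\rho_{n-1}$, relations $\sigma_i\sigma_j=\sigma_j\sigma_i$, $\rho_i\rho_j=\rho_j\rho_i$, $\sigma_i\rho_j=\rho_j\sigma_i$ for $|i-j|\ge2$; $\sigma_i\sigma_{i+1}\sigma_i=\sigma_{i+1}\sigma_i\sigma_{i+1}$; $\rho_i\rho_{i+1}\rho_i=\rho_{i+1}\rho_i\rho_{i+1}$; $\rho_i\rho_{i+1}\sigma_i=\sigma_{i+1}\rho_i\rho_{i+1}$; $\rho_i^2=\sigma_i^2=1$. $\iota_1:FVB_n\to S_n$ sends $\sigma_i,\rho_i\mapsto(i,i+1)$; $\iota_2:FVB_n\to S_n$ sends $\sigma_i\mapsto1$, $\rho_i\mapsto(i,i+1)$; $FVP_n=\ker\iota_1$, $FH_n=\ker\iota_2$. $F_{2n}$ is free on $x_1,\dots,x_n,y_1,\dots,y_n$ and $\theta:FVB_n\to{\rm Aut}(F_{2n})$ is the homomorphism with $\theta(\sigma_i):x_i\mapsto x_{i+1}y_{i+1},\ x_{i+1}\mapsto x_iy_{i+1}^{-1}$ and $\theta(\rho_i):x_i\leftrightarrow x_{i+1},\ y_i\leftrightarrow y_{i+1}$, other generators fixed; automorphisms compose on the right, $(fg)(x)=g(f(x))$.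 *)

theory Defs
  imports Main
begin

text \<open>Since sigma_i^2 = rho_i^2 = 1
  every generator is its own inverse, so group elements are represented by positive
  words; the inverse of a word is its reversal.\<close>

datatype gen = Sig nat | Rho nat

fun gen_idx :: "gen \<Rightarrow> nat" where
  "gen_idx (Sig i) = i" | "gen_idx (Rho i) = i"

definition valid_word :: "nat \<Rightarrow> gen list \<Rightarrow> bool" where
  "valid_word n w \<longleftrightarrow> (\<forall>g\<in>set w. 1 \<le> gen_idx g \<and> gen_idx g \<le> n - 1)"

definition inv_word :: "gen list \<Rightarrow> gen list" where
  "inv_word w = rev w"

definition fvb_rels :: "nat \<Rightarrow> (gen list \<times> gen list) set" where
  "fvb_rels n =
     {([Sig i, Sig j], [Sig j, Sig i]) | i j. 1 \<le> i \<and> i \<le> n - 1 \<and> 1 \<le> j \<and> j \<le> n - 1 \<and> (i + 2 \<le> j \<or> j + 2 \<le> i)}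
   \<union> {([Rho i, Rho j], [Rho j, Rho i]) | i j. 1 \<le> i \<and> i \<le> n - 1 \<and> 1 \<le> j \<and> j \<le> n - 1 \<and> (i + 2 \<le> j \<or> j + 2 \<le> i)}
   \<union> {([Sig i, Rho j], [Rho j, Sig i]) | i j. 1 \<le> i \<and> i \<le> n - 1 \<and> 1 \<le> j \<and> j \<le> n - 1 \<and> (i + 2 \<le> j \<or> j + 2 \<le> i)}
   \<union> {([Sig i, Sig (i+1), Sig i], [Sig (i+1), Sig i, Sig (i+1)]) | i. 1 \<le> i \<and> i + 1 \<le> n - 1}
   \<union> {([Rho i, Rho (i+1), Rho i], [Rho (i+1), Rho i, Rho (i+1)]) | i. 1 \<le> i \<and> i + 1 \<le> n - 1}
   \<union> {([Rho i, Rho (i+1), Sig i], [Sig (i+1), Rho i, Rho (i+1)]) | i. 1 \<le> i \<and> i + 1 \<le> n - 1}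
   \<union> {([Rho i, Rho i], []) | i. 1 \<le> i \<and> i \<le> n - 1}
   \<union> {([Sig i, Sig i], []) | i. 1 \<le> i \<and> i \<le> n - 1}"

inductive fvb_eq :: "nat \<Rightarrow> gen list \<Rightarrow> gen list \<Rightarrow> bool" for n where
  refl: "fvb_eq n w w"
| sym: "fvb_eq n u v \<Longrightarrow> fvb_eq n v u"
| trans: "fvb_eq n u v \<Longrightarrow> fvb_eq n v w \<Longrightarrow> fvb_eq n u w"
| rel: "(l, r) \<in> fvb_rels n \<Longrightarrow> valid_word n u \<Longrightarrow> valid_word n v \<Longrightarrow>
        fvb_eq n (u @ l @ v) (u @ r @ v)"

definition rel6 :: "nat \<Rightarrow> gen list" where
  "rel6 i = concat (replicate 6 [Rho i, Sig (i+1)])"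

definition in_N :: "nat \<Rightarrow> gen list \<Rightarrow> bool" where
  "in_N n w \<longleftrightarrow> valid_word n w \<and>
     (\<exists>cs :: (gen list \<times> nat \<times> bool) list.
        (\<forall>(u, i, b) \<in> set cs. valid_word n u \<and> 1 \<le> i \<and> i \<le> n - 2) \<and>
        fvb_eq n w (concat (map (\<lambda>(u, i, b). u @ (if b then rel6 i else inv_word (rel6 i)) @ inv_word u) cs)))"

text \<open>Letters of F_{2n}: (inverted?, is_y?, index k), 1 <= k <= n;
  (False, False, k) = x_k, (False, True, k) = y_k.\<close>
type_synonym fletter = "bool \<times> bool \<times> nat"

fun finv :: "fletter \<Rightarrow> fletter" where
  "finv (e, c, k) = (\<not> e, c, k)"

fun fpush :: "fletter \<Rightarrow> fletter list \<Rightarrow> fletter list" where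
  "fpush a [] = [a]"
| "fpush a (b # bs) = (if b = finv a then bs else a # b # bs)"

definition freduce :: "fletter list \<Rightarrow> fletter list" where
  "freduce w = foldr fpush w []"

definition finv_word :: "fletter list \<Rightarrow> fletter list" where
  "finv_word w = rev (map finv w)"

definition fsubst :: "(bool \<times> nat \<Rightarrow> fletter list) \<Rightarrow> fletter list \<Rightarrow> fletter list" where
  "fsubst f w = freduce (concat (map (\<lambda>(e, c, k). if e then finv_word (f (c, k)) else f (c, k)) w))"

fun theta_gen :: "gen \<Rightarrow> bool \<times> nat \<Rightarrow> fletter list" where
  "theta_gen (Sig i) (c, k) =
     (if c = False \<and> k = i then [(False, False, i+1), (False, True, i+1)]
      else if c = False \<and> k = i + 1 then [(False, False, i), (True, True, i+1)]
      else [(False, c, k)])"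
| "theta_gen (Rho i) (c, k) =
     (if k = i then [(False, c, i+1)]
      else if k = i + 1 then [(False, c, i)]
      else [(False, c, k)])"

text \<open>Image of a free generator under theta(w); automorphisms compose on the right,
  (fg)(x) = g(f(x)), so the letters of w act from left to right.\<close>
definition theta_img :: "gen list \<Rightarrow> bool \<times> nat \<Rightarrow> fletter list" where
  "theta_img w z = foldl (\<lambda>v g. fsubst (theta_gen g) v) [(False, fst z, snd z)] w"

definition in_ker_theta :: "nat \<Rightarrow> gen list \<Rightarrow> bool" where
  "in_ker_theta n w \<longleftrightarrow>
     (\<forall>c k. 1 \<le> k \<and> k \<le> n \<longrightarrow> theta_img w (c, k) = [(False, c, k)])"

definition transp :: "nat \<Rightarrow> nat \<Rightarrow> nat" where
  "transp i = (\<lambda>m. if m = i then i + 1 else if m = i + 1 then i else m)"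

text \<open>Product of permutations, composing on the right as for automorphisms.\<close>
definition iota1 :: "gen list \<Rightarrow> nat \<Rightarrow> nat" where
  "iota1 w = foldl (\<lambda>p g. transp (gen_idx g) \<circ> p) id w"

fun iota2_gen :: "gen \<Rightarrow> nat \<Rightarrow> nat" where
  "iota2_gen (Sig i) = id"
| "iota2_gen (Rho i) = transp i"

definition iota2 :: "gen list \<Rightarrow> nat \<Rightarrow> nat" where
  "iota2 w = foldl (\<lambda>p g. iota2_gen g \<circ> p) id w"

definition in_FVP :: "nat \<Rightarrow> gen list \<Rightarrow> bool" where
  "in_FVP n w \<longleftrightarrow> iota1 w = id"

definition in_FH :: "nat \<Rightarrow> gen list \<Rightarrow> bool" where
  "in_FH n w \<longleftrightarrow> iota2 w = id"

end

theory Submission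
  imports Defs
begin

fun fred :: "fletter list \<Rightarrow> bool" where
  "fred (a # b # w) = (b \<noteq> finv a \<and> fred (b # w))"
| "fred _ = True"

lemma finv_finv[simp]: "finv (finv a) = a" by (cases a) auto

lemma fred_tl: "fred (b # w) \<Longrightarrow> fred w"
  by (cases w) auto

lemma fred_fpush: "fred y \<Longrightarrow> fred (fpush a y)"
proof (cases y)
  case (Cons b bs)
  assume "fred y"
  then show ?thesis using Cons by (auto dest: fred_tl)
qed simp

lemma fred_foldr: "fred y \<Longrightarrow> fred (foldr fpush a y)"
  by (induction a) (auto intro: fred_fpush)

lemma fred_freduce: "fred (freduce w)"
  unfolding freduce_def by (rule fred_foldr) simp

lemma fpush_cancel: "fred y \<Longrightarrow> fpush a (fpush (finv a) y) = y"
proof (cases y)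
  case (Cons b bs)
  assume f: "fred y"
  show ?thesis
  proof (cases "b = a")
    case True
    then show ?thesis using Cons f by (cases bs) auto
  next
    case False
    then show ?thesis using Cons by auto
  qed
qed simp

lemma foldr_fred: "fred y \<Longrightarrow> foldr fpush a y = foldr fpush (freduce a) y"
proof (induction a)
  case Nil
  then show ?case by (simp add: freduce_def)
next
  case (Cons x a)
  define r where "r = freduce a"
  have IH: "foldr fpush a y = foldr fpush r y" using Cons r_def by simp
  have fr: "freduce (x # a) = fpush x r" by (simp add: freduce_def r_def)
  show ?case
  proof (cases r)
    case Nil
    then show ?thesis using IH fr by simp
  next
    case (Cons b r')
    show ?thesis
    proof (cases "b = finv x")
      case True
      have "fred (foldr fpush r' y)" using fred_foldr Cons.prems by blast
      then show ?thesis using IH fr Cons True fpush_cancel[of "foldr fpush r' y" x] by simp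
    next
      case False
      then show ?thesis using IH fr Cons by simp
    qed
  qed
qed

lemma freduce_append: "freduce (a @ b) = foldr fpush a (freduce b)"
  by (simp add: freduce_def)

lemma freduce_fred: "fred w \<Longrightarrow> freduce w = w"
proof (induction w)
  case (Cons a w)
  have "fred w" using Cons.prems by (rule fred_tl)
  then have "freduce w = w" using Cons.IH by simp
  then show ?case using Cons.prems by (cases w) (auto simp: freduce_def)
qed (simp add: freduce_def)

lemma freduce_idem[simp]: "freduce (freduce w) = freduce w"
  by (rule freduce_fred[OF fred_freduce])

lemma fr_app1: "freduce (a @ b) = freduce (freduce a @ b)"
proof -
  have "freduce (a @ b) = foldr fpush a (freduce b)" by (rule freduce_append)
  also have "\<dots> = foldr fpush (freduce a) (freduce b)" by (rule foldr_fred[OF fred_freduce])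
  also have "\<dots> = freduce (freduce a @ b)" by (rule freduce_append[symmetric])
  finally show ?thesis .
qed

lemma fr_app2: "freduce (a @ b) = freduce (a @ freduce b)"
  by (simp add: freduce_append)

lemma fiw_append[simp]: "finv_word (a @ b) = finv_word b @ finv_word a"
  by (simp add: finv_word_def)
lemma fiw_fiw[simp]: "finv_word (finv_word w) = w"
  by (simp add: finv_word_def rev_map comp_def)
lemma fiw_Cons[simp]: "finv_word (a # w) = finv_word w @ [finv a]"
  by (simp add: finv_word_def)
lemma fiw_Nil[simp]: "finv_word [] = []"
  by (simp add: finv_word_def)

lemma freduce_Nil[simp]: "freduce [] = []" by (simp add: freduce_def)

lemma freduce_cancel: "freduce (w @ finv_word w) = []"
proof (induction w)
  case (Cons a w)
  have "freduce ((a # w) @ finv_word (a # w)) = fpush a (freduce ((w @ finv_word w) @ [finv a]))"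
    by (simp add: freduce_def)
  also have "freduce ((w @ finv_word w) @ [finv a]) = freduce (freduce (w @ finv_word w) @ [finv a])"
    by (rule fr_app1)
  finally show ?case using Cons by (simp add: freduce_def)
qed simp

lemma freduce_cancel2: "freduce (finv_word w @ w) = []"
  using freduce_cancel[of "finv_word w"] by simp

definition S :: "(bool \<times> nat \<Rightarrow> fletter list) \<Rightarrow> fletter list \<Rightarrow> fletter list" where
  "S f w = concat (map (\<lambda>(e, c, k). if e then finv_word (f (c, k)) else f (c, k)) w)"

lemma fsubst_S: "fsubst f w = freduce (S f w)" by (simp add: fsubst_def S_def)

lemma S_Nil[simp]: "S f [] = []" by (simp add: S_def)
lemma S_append[simp]: "S f (a @ b) = S f a @ S f b" by (simp add: S_def)
lemma S_Cons: "S f (a # b) = S f [a] @ S f b" by (simp add: S_def)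
lemma S_finv: "S f [finv a] = finv_word (S f [a])"
  by (cases a) (auto simp: S_def)

lemma fr_assoc3: "freduce (a @ b @ c) = freduce (freduce (a @ b) @ c)"
  using fr_app1[of "a @ b" c] by simp

lemma fsubst_freduce: "freduce (S f (freduce a)) = freduce (S f a)"
proof (induction a)
  case Nil
  then show ?case by simp
next
  case (Cons x a)
  define r where "r = freduce a"
  have "freduce (S f (x # a)) = freduce (S f [x] @ freduce (S f a))"
    by (subst S_Cons) (rule fr_app2)
  also have "\<dots> = freduce (S f [x] @ freduce (S f r))" using Cons r_def by simp
  also have "\<dots> = freduce (S f (x # r))"
    by (subst S_Cons[of f x r]) (rule fr_app2[symmetric])
  finally have A: "freduce (S f (x # a)) = freduce (S f (x # r))" .
  have fr: "freduce (x # a) = fpush x r" by (simp add: freduce_def r_def)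
  have B: "freduce (S f (x # r)) = freduce (S f (fpush x r))"
  proof (cases r)
    case (Cons b r')
    show ?thesis
    proof (cases "b = finv x")
      case True
      have "S f (x # r) = S f [x] @ finv_word (S f [x]) @ S f r'"
        using Cons True S_finv[of f x] S_Cons[of f x r] S_Cons[of f b r'] by simp
      then have "freduce (S f (x # r)) = freduce (S f r')"
        using fr_assoc3[of "S f [x]" "finv_word (S f [x])" "S f r'"] freduce_cancel by simp
      then show ?thesis using Cons True by simp
    next
      case False
      then show ?thesis using Cons by simp
    qed
  qed simp
  show ?case using A B fr by simp
qed

lemma fiw_freduce: "freduce (finv_word w) = freduce (finv_word (freduce w))"
proof -
  define r where "r = freduce w"
  have "freduce (finv_word w @ r @ finv_word r) = freduce (freduce (finv_word w @ r) @ finv_word r)"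
    by (rule fr_assoc3)
  also have "freduce (finv_word w @ r) = freduce (finv_word w @ w)" using r_def fr_app2 by simp
  finally have X1: "freduce (finv_word w @ r @ finv_word r) = freduce (finv_word r)"
    using freduce_cancel2 by simp
  have "freduce (finv_word w @ r @ finv_word r) = freduce (finv_word w @ freduce (r @ finv_word r))"
    by (rule fr_app2)
  then have X2: "freduce (finv_word w @ r @ finv_word r) = freduce (finv_word w)"
    using freduce_cancel by simp
  show ?thesis using X1 X2 r_def by simp
qed

lemma S_fiw: "S f (finv_word w) = finv_word (S f w)"
proof (induction w)
  case (Cons a w)
  have "S f (finv_word (a # w)) = S f (finv_word w) @ S f [finv a]" by simp
  also have "\<dots> = finv_word (S f w) @ finv_word (S f [a])" using Cons S_finv by simp
  also have "\<dots> = finv_word (S f (a # w))" by (subst S_Cons) simp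
  finally show ?case .
qed simp

lemma S_comp: "S f (S g x) = S (\<lambda>z. S f (g z)) x"
proof (induction x)
  case (Cons a x)
  obtain e c k where a: "a = (e, c, k)" by (cases a)
  have "S f (S g [a]) = S (\<lambda>z. S f (g z)) [a]"
    using a S_fiw[of f "g (c,k)"] by (auto simp: S_def)
  then show ?case using Cons
    by (metis S_Cons S_append)
qed simp

lemma freduce_S_red: "freduce (S h x) = freduce (S (\<lambda>z. freduce (h z)) x)"
proof (induction x)
  case (Cons a x)
  obtain e c k where a: "a = (e, c, k)" by (cases a)
  have 1: "freduce (S h [a]) = freduce (S (\<lambda>z. freduce (h z)) [a])"
    using a fiw_freduce[of "h (c, k)"] by (auto simp: S_def)
  have "freduce (S h (a # x)) = freduce (freduce (S h [a]) @ freduce (S h x))"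
    by (subst S_Cons) (metis fr_app1 fr_app2)
  also have "\<dots> = freduce (freduce (S (\<lambda>z. freduce (h z)) [a]) @ freduce (S (\<lambda>z. freduce (h z)) x))"
    using 1 Cons by simp
  also have "\<dots> = freduce (S (\<lambda>z. freduce (h z)) (a # x))"
    by (subst (2) S_Cons) (metis fr_app1 fr_app2)
  finally show ?case .
qed simp

lemma fsubst_comp: "fsubst f (fsubst g x) = fsubst (\<lambda>z. fsubst f (g z)) x"
  unfolding fsubst_S
  by (simp add: fsubst_freduce S_comp freduce_S_red[of "\<lambda>z. S f (g z)"])

lemma S_id: "S (\<lambda>z. [(False, fst z, snd z)]) x = x"
  by (induction x) (auto simp: S_def finv_word_def)

definition Phi :: "gen list \<Rightarrow> fletter list \<Rightarrow> fletter list" where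
  "Phi l x = foldl (\<lambda>v g. fsubst (theta_gen g) v) x l"

lemma theta_img_Phi: "theta_img l z = Phi l [(False, fst z, snd z)]"
  by (simp add: theta_img_def Phi_def)

lemma theta_img_snoc: "theta_img (l @ [g]) z = fsubst (theta_gen g) (theta_img l z)"
  by (simp add: theta_img_def)

lemma Phi_hom: "fred x \<Longrightarrow> Phi l x = fsubst (theta_img l) x"
proof (induction l rule: rev_induct)
  case Nil
  then show ?case
    by (simp add: Phi_def fsubst_S theta_img_def S_id freduce_fred del: prod.collapse)
next
  case (snoc g l)
  have "Phi (l @ [g]) x = fsubst (theta_gen g) (Phi l x)" by (simp add: Phi_def)
  also have "\<dots> = fsubst (theta_gen g) (fsubst (theta_img l) x)" using snoc by simp
  also have "\<dots> = fsubst (theta_img (l @ [g])) x"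
    by (simp add: fsubst_comp theta_img_snoc[abs_def])
  finally show ?case .
qed

lemma fred_theta_img: "fred (theta_img w z)"
proof (cases w rule: rev_cases)
  case Nil
  then show ?thesis by (simp add: theta_img_def)
next
  case (snoc l g)
  then show ?thesis by (simp add: theta_img_snoc fsubst_def fred_freduce)
qed

lemma theta_img_append: "theta_img (u @ v) z = fsubst (theta_img v) (theta_img u z)"
proof -
  have "theta_img (u @ v) z = Phi v (theta_img u z)"
    by (simp add: theta_img_def Phi_def)
  then show ?thesis using Phi_hom[OF fred_theta_img] by simp
qed

lemma theta_img_Nil: "theta_img [] = (\<lambda>z. [(False, fst z, snd z)])"
  by (auto simp: theta_img_def)

lemma fsubst_id: "fred x \<Longrightarrow> fsubst (theta_img []) x = x"
  by (simp add: theta_img_Nil fsubst_S S_id freduce_fred del: prod.collapse)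

lemma cong_mid: "theta_img l = theta_img r \<Longrightarrow> theta_img (u @ l @ v) = theta_img (u @ r @ v)"
proof
  fix z assume "theta_img l = theta_img r"
  then show "theta_img (u @ l @ v) z = theta_img (u @ r @ v) z"
    by (simp only: theta_img_append[of u] theta_img_append[of l, abs_def] theta_img_append[of r, abs_def])
qed

lemma cong_Nil: "theta_img a = theta_img [] \<Longrightarrow> theta_img b = theta_img [] \<Longrightarrow> theta_img (a @ b) = theta_img []"
  using cong_mid[of a "[]" "[]" b] by simp


lemmas comp_simps = theta_img_def fsubst_def freduce_def finv_word_def

lemma sq_ok: "theta_img [g, g] = theta_img []"
proof
  fix z :: "bool \<times> nat" obtain c k where z: "z = (c, k)" by (cases z)
  show "theta_img [g, g] z = theta_img [] z"
    unfolding z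
    by (cases g; cases "k = gen_idx g"; cases "k = gen_idx g + 1"; cases c) (simp_all add: comp_simps)
qed

lemma rel6_ok: "theta_img (rel6 i) = theta_img []"
proof
  fix z :: "bool \<times> nat" obtain c k where z: "z = (c, k)" by (cases z)
  show "theta_img (rel6 i) z = theta_img [] z"
    unfolding z
    by (cases "k = i"; cases "k = i+1"; cases "k=i+2"; cases c)
      (simp_all add: rel6_def numeral_eq_Suc comp_simps)
qed

lemma comm_ok:
  assumes "i + 2 \<le> j \<or> j + 2 \<le> i" and "g \<in> {Sig i, Rho i}" and "h \<in> {Sig j, Rho j}"
  shows "theta_img [g, h] = theta_img [h, g]"
proof
  fix z :: "bool \<times> nat" obtain c k where z: "z = (c, k)" by (cases z)
  show "theta_img [g, h] z = theta_img [h, g] z"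
    unfolding z using assms
    by (cases "k = i"; cases "k = i+1"; cases "k = j"; cases "k = j+1"; cases c)
      (auto simp add: comp_simps)
qed

lemma braid_ok:
  "theta_img [Sig i, Sig (i+1), Sig i] = theta_img [Sig (i+1), Sig i, Sig (i+1)]"
  "theta_img [Rho i, Rho (i+1), Rho i] = theta_img [Rho (i+1), Rho i, Rho (i+1)]"
  "theta_img [Rho i, Rho (i+1), Sig i] = theta_img [Sig (i+1), Rho i, Rho (i+1)]"
proof -
  show "theta_img [Sig i, Sig (i+1), Sig i] = theta_img [Sig (i+1), Sig i, Sig (i+1)]"
  proof
    fix z :: "bool \<times> nat" obtain c k where z: "z = (c, k)" by (cases z)
    show "theta_img [Sig i, Sig (i+1), Sig i] z = theta_img [Sig (i+1), Sig i, Sig (i+1)] z"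
      unfolding z
      by (cases "k = i"; cases "k = i+1"; cases "k=i+2"; cases c) (simp_all add: comp_simps)
  qed
  show "theta_img [Rho i, Rho (i+1), Rho i] = theta_img [Rho (i+1), Rho i, Rho (i+1)]"
  proof
    fix z :: "bool \<times> nat" obtain c k where z: "z = (c, k)" by (cases z)
    show "theta_img [Rho i, Rho (i+1), Rho i] z = theta_img [Rho (i+1), Rho i, Rho (i+1)] z"
      unfolding z
      by (cases "k = i"; cases "k = i+1"; cases "k=i+2"; cases c) (simp_all add: comp_simps)
  qed
  show "theta_img [Rho i, Rho (i+1), Sig i] = theta_img [Sig (i+1), Rho i, Rho (i+1)]"
  proof
    fix z :: "bool \<times> nat" obtain c k where z: "z = (c, k)" by (cases z)
    show "theta_img [Rho i, Rho (i+1), Sig i] z = theta_img [Sig (i+1), Rho i, Rho (i+1)] z"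
      unfolding z
      by (cases "k = i"; cases "k = i+1"; cases "k=i+2"; cases c) (simp_all add: comp_simps)
  qed
qed


lemma rels_ok: "(l, r) \<in> fvb_rels n \<Longrightarrow> theta_img l = theta_img r"
  unfolding fvb_rels_def
  apply (elim UnE CollectE exE conjE)
  apply (simp_all only: prod.inject)
         apply (rule comm_ok; simp; fail)+
     apply (rule braid_ok)+
   apply (rule sq_ok)+
  done

lemma fvb_eq_theta: "fvb_eq n u v \<Longrightarrow> theta_img u = theta_img v"
  by (induction rule: fvb_eq.induct) (auto intro: cong_mid rels_ok)

lemma conj_rev: "theta_img (u @ rev u) = theta_img []"
proof (induction u)
  case (Cons g u)
  have "theta_img ((g # u) @ rev (g # u)) = theta_img ([g] @ (u @ rev u) @ [g])" by simp
  also have "\<dots> = theta_img ([g] @ [] @ [g])" by (rule cong_mid[OF Cons])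
  also have "\<dots> = theta_img []" using sq_ok by simp
  finally show ?case .
qed simp

lemma rev_ok: "theta_img w = theta_img [] \<Longrightarrow> theta_img (rev w) = theta_img []"
proof -
  assume a: "theta_img w = theta_img []"
  have "theta_img (rev w @ [] @ []) = theta_img (rev w @ w @ [])"
    by (rule cong_mid) (rule a[symmetric])
  then show ?thesis using conj_rev[of "rev w"] by simp
qed

lemma conj_ok: "theta_img x = theta_img [] \<Longrightarrow> theta_img (u @ x @ rev u) = theta_img []"
  using cong_mid[of x "[]" u "rev u"] conj_rev[of u] by simp

lemma part1: "in_N n w \<Longrightarrow> in_ker_theta n w"
proof -
  assume "in_N n w"
  then obtain cs where eq: "fvb_eq n w (concat (map (\<lambda>(u, i, b). u @ (if b then rel6 i else inv_word (rel6 i)) @ inv_word u) cs))"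
    unfolding in_N_def by blast
  have "theta_img (concat (map (\<lambda>(u, i, b). u @ (if b then rel6 i else inv_word (rel6 i)) @ inv_word u) cs)) = theta_img []"
  proof (induction cs)
    case Nil
    then show ?case by simp
  next
    case (Cons a cs)
    obtain u i b where a: "a = (u, i, b)" by (cases a)
    have "theta_img (if b then rel6 i else inv_word (rel6 i)) = theta_img []"
      using rel6_ok rev_ok[OF rel6_ok] by (simp add: inv_word_def)
    then have "theta_img (u @ (if b then rel6 i else inv_word (rel6 i)) @ inv_word u) = theta_img []"
      unfolding inv_word_def by (rule conj_ok)
    then show ?case using Cons a cong_Nil by (metis (no_types, lifting) case_prod_conv concat.simps(2) list.simps(9))
  qed
  then have "theta_img w = theta_img []" using fvb_eq_theta[OF eq] by simp
  then show ?thesis unfolding in_ker_theta_def by (simp add: theta_img_Nil)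
qed


fun lsig :: "fletter \<Rightarrow> nat \<Rightarrow> int" where
  "lsig (e, c, k) m = (if c = False \<and> k = m then (if e then -1 else 1) else 0)"

definition ab :: "fletter list \<Rightarrow> nat \<Rightarrow> int" where
  "ab w m = sum_list (map (\<lambda>a. lsig a m) w)"

lemma ab_Nil[simp]: "ab [] m = 0" by (simp add: ab_def)
lemma ab_Cons[simp]: "ab (a # w) m = lsig a m + ab w m" by (simp add: ab_def)
lemma ab_append[simp]: "ab (u @ w) m = ab u m + ab w m" by (simp add: ab_def)

lemma lsig_finv: "lsig (finv a) m = - lsig a m"
  by (cases a) auto

lemma ab_fpush: "ab (fpush a bs) m = lsig a m + ab bs m"
  by (cases bs) (auto simp: lsig_finv)

lemma ab_freduce: "ab (freduce w) m = ab w m"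
  by (induction w) (auto simp: freduce_def ab_fpush)

lemma ab_fiw: "ab (finv_word w) m = - ab w m"
  by (induction w) (auto simp: lsig_finv)

definition relab :: "(nat \<Rightarrow> nat) \<Rightarrow> fletter \<Rightarrow> fletter" where
  "relab p a = (case a of (e, c, k) \<Rightarrow> (e, c, p k))"

lemma ab_S:
  assumes "\<And>k m. ab (f (False, k)) m = ab [(False, False, p k)] m"
    and "\<And>k m. ab (f (True, k)) m = 0"
  shows "ab (S f v) m = ab (map (relab p) v) m"
proof (induction v)
  case (Cons a v)
  obtain e c k where a: "a = (e, c, k)" by (cases a)
  have "ab (S f [a]) m = lsig (relab p a) m"
    using a assms[of k m] by (cases c) (auto simp: S_def ab_fiw relab_def)
  then show ?case using Cons by (subst S_Cons) simp
qed simp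

lemma ab_relab:
  assumes "\<And>j. p (p j) = j"
  shows "ab (map (relab p) v) m = ab v (p m)"
proof (induction v)
  case (Cons a v)
  obtain e c k where a: "a = (e, c, k)" by (cases a)
  have "lsig (relab p a) m = lsig a (p m)"
    using a assms by (auto simp: relab_def)
  then show ?case using Cons by simp
qed simp

lemma transp_inv: "transp i (transp i j) = j"
  by (auto simp: transp_def)

lemma gen_ab:
  "ab (theta_gen g (False, k)) m = ab [(False, False, transp (gen_idx g) k)] m"
  "ab (theta_gen g (True, k)) m = 0"
  by (cases g; auto simp: transp_def)+

lemma iota1_snoc: "iota1 (w @ [g]) = transp (gen_idx g) \<circ> iota1 w"
  by (simp add: iota1_def)

lemma iota2_snoc: "iota2 (w @ [g]) = iota2_gen g \<circ> iota2 w"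
  by (simp add: iota2_def)

lemma track:
  "ab (theta_img w (False, k)) m = (if m = iota1 w k then 1 else 0) \<and>
   theta_img w (True, k) = [(False, True, iota2 w k)]"
proof (induction w arbitrary: k m rule: rev_induct)
  case Nil
  then show ?case by (simp add: theta_img_def iota1_def iota2_def)
next
  case (snoc g w)
  have "ab (theta_img (w @ [g]) (False, k)) m = ab (S (theta_gen g) (theta_img w (False, k))) m"
    by (simp add: theta_img_snoc fsubst_S ab_freduce)
  also have "\<dots> = ab (theta_img w (False, k)) (transp (gen_idx g) m)"
    by (rule HOL.trans[OF ab_S[of "theta_gen g" "transp (gen_idx g)", OF gen_ab(1) gen_ab(2)]
          ab_relab[of "transp (gen_idx g)", OF transp_inv]])
  also have "\<dots> = (if transp (gen_idx g) m = iota1 w k then 1 else 0)"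
    using snoc[of k "transp (gen_idx g) m"] by blast
  also have "\<dots> = (if m = iota1 (w @ [g]) k then 1 else 0)"
    unfolding iota1_snoc o_apply using transp_inv by metis
  finally have 1: "ab (theta_img (w @ [g]) (False, k)) m = (if m = iota1 (w @ [g]) k then 1 else 0)" .
  have 2: "theta_img (w @ [g]) (True, k) = [(False, True, iota2 (w @ [g]) k)]"
    using snoc[of k m]
    by (cases g) (simp_all add: theta_img_snoc iota2_snoc fsubst_def freduce_def finv_word_def transp_def)
  show ?case using 1 2 by simp
qed

lemma transp_out: "1 \<le> i \<Longrightarrow> i \<le> n - 1 \<Longrightarrow> (k = 0 \<or> n < k) \<Longrightarrow> transp i k = k"
  by (auto simp: transp_def)

lemma iota_out:
  assumes "valid_word n w" "k = 0 \<or> n < k"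
  shows "iota1 w k = k \<and> iota2 w k = k"
  using assms
proof (induction w rule: rev_induct)
  case (snoc g w)
  have v: "valid_word n w" and g: "1 \<le> gen_idx g" "gen_idx g \<le> n - 1"
    using snoc.prems by (auto simp: valid_word_def)
  have "iota1 w k = k \<and> iota2 w k = k" using snoc.IH v snoc.prems by blast
  then show ?case using transp_out[OF g snoc.prems(2)]
    by (cases g) (auto simp: iota1_snoc iota2_snoc)
qed (simp add: iota1_def iota2_def)

lemma part2: "valid_word n w \<Longrightarrow> in_ker_theta n w \<Longrightarrow> in_FVP n w \<and> in_FH n w"
proof -
  assume v: "valid_word n w" and ker: "in_ker_theta n w"
  have "iota1 w k = k \<and> iota2 w k = k" for k
  proof (cases "1 \<le> k \<and> k \<le> n")
    case True
    have a: "theta_img w (False, k) = [(False, False, k)]"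
      and b: "theta_img w (True, k) = [(False, True, k)]"
      using ker True unfolding in_ker_theta_def by simp_all
    have "ab (theta_img w (False, k)) k = (if k = iota1 w k then 1 else 0)"
      using track[of w k k] by (rule conjunct1)
    moreover have "ab (theta_img w (False, k)) k = 1" unfolding a by simp
    ultimately have "(if k = iota1 w k then 1 else 0) = (1::int)" by (rule HOL.trans[OF HOL.sym])
    then have 1: "iota1 w k = k" by (metis zero_neq_one)
    have "theta_img w (True, k) = [(False, True, iota2 w k)]"
      using track[of w k k] by (rule conjunct2)
    then have 2: "iota2 w k = k" using b by (metis list.inject prod.inject)
    show ?thesis using 1 2 by simp
  next
    case False
    then have "k = 0 \<or> n < k" by auto
    then show ?thesis by (rule iota_out[OF v])
  qed
  then show ?thesis unfolding in_FVP_def in_FH_def by (simp add: fun_eq_iff)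
qed

theorem corollary1:
  fixes n :: nat
  assumes "n \<ge> 3"
  shows "(\<forall>w. in_N n w \<longrightarrow> in_ker_theta n w) \<and>
         (\<forall>w. valid_word n w \<and> in_ker_theta n w \<longrightarrow> in_FVP n w \<and> in_FH n w)"
  using part1 part2 by blast

end
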